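(* For all $(n,k)\in\mathcal{I}$ with $n\neq0$, writing $l=l_{n,k}$, $m=m_{n,k}$, $r=r_{n,k}$: (i) $M_{n,k}=L_{n,k}+R_{n,k}$; (ii) $\Sigma_{n,k}^{-1}=\big(h_m(l,m)\big)^{-1}+\big(h_m(m,r)\big)^{-1}$.
   Context: Let $d,m\geq 1$. Let $\alpha:[0,1]\to\mathbb{R}^{d\times d}$, $\sqrt{\Gamma}:[0,1]\to\mathbb{R}^{d\times m}$ be continuous, $\Gamma=\sqrt{\Gamma}\sqrt{\Gamma}^{T}$. Let $F(s,t)$ be the flow ($\partial_tF(s,t)=\alpha(t)F(s,t)$, $F(s,s)=I_d$), $h_u(s,t)=\int_s^t F(w,u)\Gamma(w)F(w,u)^Tdw$, $h=h_0$, $g(t)=F(0,t)$. Non-degeneracy: $F(u,v)h_u(u,v)F(u,v)^T$ is positive definite for all $0\le u<v\le1$ (this is the conditional covariance of $X_v$ given $X_u$ for the solution $X$ of $dX_t=\alpha X_tdt+\sqrt{\Gamma}dW_t$, $X_0=0$). $\mathcal{I}=\{(0,0)\}\cup\{(n,k):n\ge1,\ 0\le k<2^{n-1}\}$. Partition: fix $\rho\in(0,1)$ and reals $l_{n,k}<m_{n,k}<r_{n,k}$ ($n\ge1$) with $l_{1,0}=0$, $r_{1,0}=1$, $l_{n+1,2k}=l_{n,k}$, $r_{n+1,2k}=l_{n+1,2k+1}=m_{n,k}$, $r_{n+1,2k+1}=r_{n,k}$, $\max(r_{n,k}-m_{n,k},m_{n,k}-l_{n,k})<\rho(r_{n,k}-l_{n,k})$.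 For $n\ge1$: $\Sigma_{n,k}=h_m(l,m)h_m(l,r)^{-1}h_m(m,r)$; $\sigma_{n,k}$ is its lower-triangular Cholesky factor with positive diagonal ($\sigma_{n,k}\sigma_{n,k}^T=\Sigma_{n,k}$); $L_{n,k}=h(l,m)^{-1}g(m)^{-1}\sigma_{n,k}$, $R_{n,k}=h(m,r)^{-1}g(m)^{-1}\sigma_{n,k}$, $M_{n,k}=g(m)^T(\sigma_{n,k}^{-1})^T$. *)

theory Defs
  imports "HOL-Analysis.Analysis"
begin

text \<open>Matrices are HOL-Analysis matrices: real^'c^'r has rows indexed by 'r, columns by 'c.\<close>

definition is_flow :: "(real \<Rightarrow> real^'d^'d) \<Rightarrow> (real \<Rightarrow> real \<Rightarrow> real^'d^'d) \<Rightarrow> bool" where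
  "is_flow \<alpha> F \<longleftrightarrow>
     (\<forall>s\<in>{0..1}. F s s = mat 1 \<and>
        (\<forall>t\<in>{0..1}. (F s has_vector_derivative (\<alpha> t ** F s t)) (at t within {0..1})))"

definition Gam :: "(real \<Rightarrow> real^'m^'d) \<Rightarrow> real \<Rightarrow> real^'d^'d" where
  "Gam sG w = sG w ** transpose (sG w)"

definition hh :: "(real \<Rightarrow> real \<Rightarrow> real^'d^'d) \<Rightarrow> (real \<Rightarrow> real^'m^'d) \<Rightarrow> real \<Rightarrow> real \<Rightarrow> real \<Rightarrow> real^'d^'d" where
  "hh F sG u s t = integral {s..t} (\<lambda>w. F w u ** Gam sG w ** transpose (F w u))"

definition pos_def_mat :: "real^'d^'d \<Rightarrow> bool" where
  "pos_def_mat A \<longleftrightarrow> transpose A = A \<and> (\<forall>x. x \<noteq> 0 \<longrightarrow> x \<bullet> (A *v x) > 0)"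

definition is_cholesky :: "((real, 'd::{finite,linorder}) vec, 'd) vec \<Rightarrow> ((real, 'd) vec, 'd) vec \<Rightarrow> bool" where
  "is_cholesky \<sigma> S \<longleftrightarrow> (\<forall>i j. i < j \<longrightarrow> \<sigma> $ i $ j = 0) \<and> (\<forall>i. \<sigma> $ i $ i > 0) \<and> \<sigma> ** transpose \<sigma> = S"

text \<open>Dyadic nested partition: index set I minus (0,0) is {(n,k). n \<ge> 1, k < 2^(n-1)}.\<close>
definition is_partition :: "real \<Rightarrow> (nat \<Rightarrow> nat \<Rightarrow> real) \<Rightarrow> (nat \<Rightarrow> nat \<Rightarrow> real) \<Rightarrow> (nat \<Rightarrow> nat \<Rightarrow> real) \<Rightarrow> bool" where
  "is_partition \<rho> l m r \<longleftrightarrow> 0 < \<rho> \<and> \<rho> < 1 \<and> l 1 0 = 0 \<and> r 1 0 = 1 \<and>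
     (\<forall>n k. 1 \<le> n \<and> k < 2^(n-1) \<longrightarrow>
        l n k < m n k \<and> m n k < r n k \<and>
        l (n+1) (2*k) = l n k \<and> r (n+1) (2*k) = m n k \<and> l (n+1) (2*k+1) = m n k \<and>
        r (n+1) (2*k+1) = r n k \<and>
        max (r n k - m n k) (m n k - l n k) < \<rho> * (r n k - l n k))"

definition SigmaM where
  "SigmaM F sG l m r n k =
     hh F sG (m n k) (l n k) (m n k) ** matrix_inv (hh F sG (m n k) (l n k) (r n k)) ** hh F sG (m n k) (m n k) (r n k)"

definition LM where
  "LM F sG \<sigma> l m n k = matrix_inv (hh F sG 0 (l n k) (m n k)) ** matrix_inv (F 0 (m n k)) ** \<sigma> n k"

definition RM where
  "RM F sG \<sigma> m r n k = matrix_inv (hh F sG 0 (m n k) (r n k)) ** matrix_inv (F 0 (m n k)) ** \<sigma> n k"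

definition MM where
  "MM F \<sigma> m n k = transpose (F 0 (m n k)) ** transpose (matrix_inv (\<sigma> n k))"

end

theory Submission imports Defs begin

lemma matrix_add_rdistrib': "((A + B) ** C) = (A ** C) + (B ** (C::'a::semiring_1^_^_))"
  by (vector matrix_matrix_mult_def sum.distrib[symmetric] field_simps)

lemma matrix_diff_ldistrib': "(A ** (B - C)) = (A ** B) - (A ** (C::'a::ring_1^_^_))"
  by (vector matrix_matrix_mult_def sum_subtractf[symmetric] field_simps)

lemma bb_mult: "bounded_bilinear (\<lambda>(A::real^'n^'m) (B::real^'p^'n). A ** B)"
  unfolding bilinear_conv_bounded_bilinear[symmetric] bilinear_def linear_iff
  by (simp add: matrix_add_ldistrib matrix_add_rdistrib' scalar_matrix_assoc matrix_scalar_ac)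

lemma ode_unique:
  fixes D :: "real \<Rightarrow> real^'n^'n" and \<alpha> :: "real \<Rightarrow> real^'n^'n"
  assumes cont: "continuous_on {0..1} \<alpha>"
    and der: "\<And>t. t\<in>{0..1} \<Longrightarrow> (D has_vector_derivative (\<alpha> t ** D t)) (at t within {0..1})"
    and v: "v \<in> {0..1}" "D v = 0" and t: "t \<in> {0..1}"
  shows "D t = 0"
proof -
  obtain Kb where Kb: "Kb > 0" "\<And>A B. norm ((A::real^'n^'n) ** (B::real^'n^'n)) \<le> norm A * norm B * Kb"
    using bounded_bilinear.pos_bounded[OF bb_mult] by blast
  have "compact (\<alpha> ` {0..1})" using compact_continuous_image[OF cont] by simp
  then obtain C where C: "C > 0" "\<And>x. x \<in> {0..1} \<Longrightarrow> norm (\<alpha> x) \<le> C"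
    using compact_imp_bounded bounded_pos by (metis image_eqI)
  define c where "c = 2 * Kb * C"
  have c0: "c \<ge> 0" using Kb C by (simp add: c_def)
  define q where "q x = D x \<bullet> D x" for x
  have key: "\<bar>D x \<bullet> (\<alpha> x ** D x)\<bar> * 2 \<le> c * q x" if x: "x \<in> {0..1}" for x
  proof -
    have "\<bar>D x \<bullet> (\<alpha> x ** D x)\<bar> \<le> norm (D x) * norm (\<alpha> x ** D x)"
      by (rule Cauchy_Schwarz_ineq2)
    also have "\<dots> \<le> norm (D x) * (norm (\<alpha> x) * norm (D x) * Kb)"
      by (intro mult_left_mono Kb(2)) simp
    also have "\<dots> \<le> norm (D x) * (C * norm (D x) * Kb)"
      using C(2)[OF x] Kb(1) by (intro mult_left_mono mult_right_mono) auto
    also have "\<dots> = Kb * C * q x" by (simp add: q_def power2_norm_eq_inner[symmetric] power2_eq_square)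
    finally show ?thesis by (simp add: c_def)
  qed
  have qd: "(q has_real_derivative 2 * (D x \<bullet> (\<alpha> x ** D x))) (at x within {0..1})" if x: "x \<in> {0..1}" for x
  proof -
    have "((\<lambda>x. D x \<bullet> D x) has_vector_derivative (D x \<bullet> (\<alpha> x ** D x) + (\<alpha> x ** D x) \<bullet> D x)) (at x within {0..1})"
      by (rule bounded_bilinear.has_vector_derivative[OF bounded_bilinear_inner der[OF x] der[OF x]])
    then show ?thesis unfolding q_def has_real_derivative_iff_has_vector_derivative
      by (simp add: inner_commute)
  qed
  have Dc: "continuous_on {0..1} D"
    using der has_vector_derivative_continuous continuous_on_eq_continuous_within by blast
  have qc: "continuous_on {0..1} q" unfolding q_def by (intro continuous_intros Dc)
  have q0: "q x \<ge> 0" for x by (simp add: q_def)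
  have qv: "q v = 0" by (simp add: q_def v)
  have int: "x \<in> interior {0..1::real}" if "0 < x" "x < 1" for x using that by simp
  have "q t = 0"
  proof (cases "v \<le> t")
    case True
    define f where "f x = exp (- c * x) * q x" for x
    have "f v \<ge> f t"
    proof (rule DERIV_nonpos_imp_decreasing_open[OF True])
      fix x assume x: "v < x" "x < t"
      hence xI: "x \<in> {0..1}" using v t by auto
      have "(f has_real_derivative (exp (- c * x) * (2 * (D x \<bullet> (\<alpha> x ** D x))) + (- c) * exp (- c * x) * q x)) (at x within {0..1})"
        unfolding f_def
        by (rule DERIV_mult[OF _ qd[OF xI], THEN DERIV_cong]) (auto intro!: derivative_eq_intros)
      moreover have "at x within {0..1} = at x" using x v t by (intro at_within_interior int) auto
      moreover have "exp (- c * x) * (2 * (D x \<bullet> (\<alpha> x ** D x))) + (- c) * exp (- c * x) * q x \<le> 0"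
      proof -
        have "2 * (D x \<bullet> (\<alpha> x ** D x)) \<le> c * q x" using key[OF xI] by linarith
        then show ?thesis by (simp add: algebra_simps mult_left_mono)
      qed
      ultimately show "\<exists>y. DERIV f x :> y \<and> y \<le> 0" by auto
    next
      show "continuous_on {v..t} f" unfolding f_def
        using v t by (intro continuous_intros continuous_on_subset[OF qc]) auto
    qed
    then show ?thesis using qv q0[of t] by (simp add: f_def mult_le_0_iff)
  next
    case False
    define f where "f x = exp (c * x) * q x" for x
    have "f t \<le> f v"
    proof (rule DERIV_nonneg_imp_increasing_open[of t v f])
      show "t \<le> v" using False by simp
      fix x assume x: "t < x" "x < v"
      hence xI: "x \<in> {0..1}" using v t by auto
      have "(f has_real_derivative (exp (c * x) * (2 * (D x \<bullet> (\<alpha> x ** D x))) + c * exp (c * x) * q x)) (at x within {0..1})"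
        unfolding f_def
        by (rule DERIV_mult[OF _ qd[OF xI], THEN DERIV_cong]) (auto intro!: derivative_eq_intros)
      moreover have "at x within {0..1} = at x" using x v t by (intro at_within_interior int) auto
      moreover have "exp (c * x) * (2 * (D x \<bullet> (\<alpha> x ** D x))) + c * exp (c * x) * q x \<ge> 0"
      proof -
        have "- (2 * (D x \<bullet> (\<alpha> x ** D x))) \<le> c * q x" using key[OF xI] by linarith
        then have "0 \<le> exp (c * x) * (c * q x + 2 * (D x \<bullet> (\<alpha> x ** D x)))"
          by (intro mult_nonneg_nonneg) auto
        then show ?thesis by (simp add: algebra_simps)
      qed
      ultimately show "\<exists>y. DERIV f x :> y \<and> y \<ge> 0" by auto
    next
      show "continuous_on {t..v} f" unfolding f_def
        using v t by (intro continuous_intros continuous_on_subset[OF qc]) auto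
    qed
    then show ?thesis using qv q0[of t] by (simp add: f_def mult_le_0_iff)
  qed
  then show ?thesis by (simp add: q_def)
qed

lemma minv_eq:
  fixes A B :: "real^'n^'n"
  assumes "A ** B = mat 1"
  shows "matrix_inv A = B"
proof -
  have BA: "B ** A = mat 1" using assms matrix_left_right_inverse by blast
  have ex: "\<exists>A'. A ** A' = mat 1 \<and> A' ** A = mat 1" using assms BA by blast
  define A' where "A' = matrix_inv A"
  have "A ** A' = mat 1 \<and> A' ** A = mat 1"
    unfolding A'_def matrix_inv_def by (rule someI_ex[OF ex])
  hence "A' = A' ** (A ** B)" using assms by simp
  also have "\<dots> = B" using \<open>A ** A' = mat 1 \<and> A' ** A = mat 1\<close> by (simp add: matrix_mul_assoc)
  finally show ?thesis by (simp add: A'_def)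
qed

lemma minv_props:
  fixes A :: "real^'n^'n"
  assumes "invertible A"
  shows "A ** matrix_inv A = mat 1" "matrix_inv A ** A = mat 1"
proof -
  obtain B where B: "A ** B = mat 1" using assms invertible_def by blast
  show "A ** matrix_inv A = mat 1" using minv_eq[OF B] B by simp
  then show "matrix_inv A ** A = mat 1" using matrix_left_right_inverse by blast
qed

lemma posdef_invertible:
  fixes A :: "real^'n^'n"
  assumes "pos_def_mat A"
  shows "invertible A"
proof -
  have "inj ((*v) A)"
  proof (rule injI)
    fix x y assume "A *v x = A *v y"
    hence "A *v (x - y) = 0" by (simp add: matrix_vector_mult_diff_distrib)
    hence "(x - y) \<bullet> (A *v (x - y)) = 0" by simp
    thus "x = y" using assms unfolding pos_def_mat_def by (metis less_irrefl eq_iff_diff_eq_0)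
  qed
  then have "det (matrix ((*v) A)) \<noteq> 0"
    by (subst det_nz_iff_inj) (auto simp: matrix_vector_mul_linear)
  then show ?thesis by (simp add: invertible_det_nz)
qed

lemma invertible_middle:
  fixes X Y Z :: "real^'n^'n"
  assumes "invertible (X ** Y ** Z)"
  shows "invertible Y"
  using assms by (auto simp: invertible_det_nz det_mul)

lemma bl_transpose: "bounded_linear (transpose :: real^'n^'m \<Rightarrow> real^'m^'n)"
  unfolding linear_conv_bounded_linear[symmetric] linear_iff
  by (simp add: transpose_def vec_eq_iff)

lemma cocycle:
  fixes \<alpha> :: "real \<Rightarrow> real^'n^'n"
  assumes cont: "continuous_on {0..1} \<alpha>" and fl: "is_flow \<alpha> F"
    and s: "s \<in> {0..1}" and v: "v \<in> {0..1}" and t: "t \<in> {0..1}"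
  shows "F s t = F v t ** F s v"
proof -
  define D where "D t = F s t - F v t ** F s v" for t
  have "D t = 0"
  proof (rule ode_unique[OF cont _ v _ t])
    fix x assume x: "x \<in> {0..1::real}"
    have d1: "(F s has_vector_derivative (\<alpha> x ** F s x)) (at x within {0..1})"
      using fl s x unfolding is_flow_def by blast
    have d2: "(F v has_vector_derivative (\<alpha> x ** F v x)) (at x within {0..1})"
      using fl v x unfolding is_flow_def by blast
    have d3: "((\<lambda>x. F v x ** F s v) has_vector_derivative (F v x ** 0 + (\<alpha> x ** F v x) ** F s v)) (at x within {0..1})"
      by (rule bounded_bilinear.has_vector_derivative[OF bb_mult d2 has_vector_derivative_const])
    have "(D has_vector_derivative (\<alpha> x ** F s x - (\<alpha> x ** F v x) ** F s v)) (at x within {0..1})"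
      unfolding D_def using has_vector_derivative_diff[OF d1 d3] by simp
    moreover have "\<alpha> x ** F s x - (\<alpha> x ** F v x) ** F s v = \<alpha> x ** D x"
      by (simp add: D_def matrix_mul_assoc matrix_diff_ldistrib')
    ultimately show "(D has_vector_derivative (\<alpha> x ** D x)) (at x within {0..1})" by simp
  next
    show "D v = 0" using fl v unfolding is_flow_def D_def by simp
  qed
  then show ?thesis by (simp add: D_def)
qed

lemma matrix_diff_rdistrib': "((A - B) ** C) = (A ** C) - (B ** (C::'a::ring_1^_^_))"
  by (vector matrix_matrix_mult_def sum_subtractf[symmetric] field_simps)

lemma inv_cont:
  fixes A K :: "real \<Rightarrow> real^'n^'n"
  assumes contA: "continuous_on S A" and KA: "\<And>x. x\<in>S \<Longrightarrow> K x ** A x = mat 1"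
    and AK: "\<And>x. x\<in>S \<Longrightarrow> A x ** K x = mat 1"
  shows "continuous_on S K"
  unfolding continuous_on_iff
proof (intro ballI allI impI)
  fix x0 e :: real assume x0: "x0 \<in> S" and e: "0 < e"
  obtain Kb where Kb: "Kb > 0" "\<And>A B. norm ((A::real^'n^'n) ** (B::real^'n^'n)) \<le> norm A * norm B * Kb"
    using bounded_bilinear.pos_bounded[OF bb_mult] by blast
  define n0 where "n0 = norm (K x0)"
  define N where "N = n0 + 1"
  have N: "N > 0" "n0 \<le> N" "n0 \<ge> 0" unfolding N_def n0_def by (auto intro: add_nonneg_pos)
  define KK where "KK = Kb * Kb"
  have KK: "KK > 0" using Kb by (simp add: KK_def)
  define eps where "eps = min (1/(2*KK*N)) (e/(2*KK*N*N))"
  have eps: "eps > 0" using KK N e by (simp add: eps_def)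
  obtain d where d: "d > 0" "\<And>x'. x' \<in> S \<Longrightarrow> dist x' x0 < d \<Longrightarrow> dist (A x') (A x0) < eps"
    using contA x0 eps unfolding continuous_on_iff by metis
  show "\<exists>d>0. \<forall>x'\<in>S. dist x' x0 < d \<longrightarrow> dist (K x') (K x0) < e"
  proof (intro exI conjI ballI impI)
    show "d > 0" by fact
    fix x' assume x': "x' \<in> S" "dist x' x0 < d"
    define a where "a = norm (A x0 - A x')"
    have a: "a < eps" "a \<ge> 0" using d(2)[OF x'] by (auto simp: a_def dist_norm norm_minus_commute)
    define k where "k = norm (K x')"
    have k: "k \<ge> 0" by (simp add: k_def)
    have eq: "K x' - K x0 = K x' ** (A x0 - A x') ** K x0"
    proof -
      have "K x' ** (A x0 - A x') ** K x0 = (K x' ** A x0) ** K x0 - (K x' ** A x') ** K x0"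
        by (simp add: matrix_diff_ldistrib' matrix_diff_rdistrib')
      also have "\<dots> = K x' ** (A x0 ** K x0) - K x0"
        by (simp add: matrix_mul_assoc KA[OF x'(1)])
      also have "\<dots> = K x' - K x0" by (simp add: AK[OF x0])
      finally show ?thesis by simp
    qed
    define dd where "dd = norm (K x' - K x0)"
    have h1: "dd \<le> KK * k * a * n0"
    proof -
      have "dd \<le> norm (K x' ** (A x0 - A x')) * n0 * Kb" unfolding dd_def n0_def eq by (rule Kb(2))
      also have "\<dots> \<le> (k * a * Kb) * n0 * Kb"
        using Kb(1) N(3) unfolding k_def a_def by (intro mult_right_mono Kb(2)) auto
      finally show ?thesis by (simp add: KK_def algebra_simps)
    qed
    have h2: "k \<le> n0 + dd"
      unfolding k_def n0_def dd_def by (metis add.commute diff_add_cancel norm_triangle_ineq)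
    have h3: "KK * a * N \<le> 1/2"
    proof -
      have "a \<le> 1/(2*KK*N)" using a eps_def by simp
      hence "a * (2*KK*N) \<le> 1" using KK N by (simp add: field_simps)
      thus ?thesis by (simp add: algebra_simps)
    qed
    have h4: "KK * k * a * n0 \<le> k / 2"
    proof -
      have "KK * k * a * n0 \<le> KK * k * a * N"
        using KK k a N by (intro mult_left_mono) auto
      also have "\<dots> = k * (KK * a * N)" by (simp add: algebra_simps)
      also have "\<dots> \<le> k * (1/2)" using h3 k by (intro mult_left_mono) auto
      finally show ?thesis by simp
    qed
    have h5: "k \<le> 2 * N" using h1 h2 h4 N by linarith
    have "dd \<le> KK * (2*N) * a * N"
    proof -
      have "KK * k * a * n0 \<le> KK * (2*N) * a * N"
        using KK k a N h5 by (intro mult_mono) (auto intro!: mult_nonneg_nonneg)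
      then show ?thesis using h1 by linarith
    qed
    also have "\<dots> < e"
    proof -
      have "a < e/(2*KK*N*N)" using a eps_def by simp
      hence "a * (2*KK*N*N) < e" using KK N by (simp add: field_simps)
      thus ?thesis by (simp add: algebra_simps)
    qed
    finally show "dist (K x') (K x0) < e" by (simp add: dd_def dist_norm)
  qed
qed

lemma flow_inv:
  fixes \<alpha> :: "real \<Rightarrow> real^'n^'n"
  assumes cont: "continuous_on {0..1} \<alpha>" and fl: "is_flow \<alpha> F"
    and s: "s \<in> {0..1}" and v: "v \<in> {0..1}"
  shows "F v s ** F s v = mat 1"
proof -
  have e2: "F s s = mat 1" using fl s unfolding is_flow_def by blast
  show ?thesis using cocycle[OF cont fl s v s] e2 by argo
qed

lemma flow_cont2:
  fixes \<alpha> :: "real \<Rightarrow> real^'n^'n"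
  assumes fl: "is_flow \<alpha> F" and s: "s \<in> {0..1}"
  shows "continuous_on {0..1} (F s)"
proof -
  have "continuous (at t within {0..1}) (F s)" if t: "t \<in> {0..1}" for t
  proof -
    have d: "(F s has_vector_derivative (\<alpha> t ** F s t)) (at t within {0..1})"
      using fl s t unfolding is_flow_def by blast
    show ?thesis by (rule has_vector_derivative_continuous[OF d])
  qed
  then show ?thesis unfolding continuous_on_eq_continuous_within by blast
qed

lemma flow_cont1:
  fixes \<alpha> :: "real \<Rightarrow> real^'n^'n"
  assumes cont: "continuous_on {0..1} \<alpha>" and fl: "is_flow \<alpha> F" and u: "u \<in> {0..1}"
  shows "continuous_on {0..1} (\<lambda>w. F w u)"
proof -
  have z: "(0::real) \<in> {0..1}" by simp
  have K: "continuous_on {0..1} (\<lambda>w. F w 0)"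
  proof (rule inv_cont[OF flow_cont2[OF fl z]])
    fix x :: real assume x: "x \<in> {0..1}"
    show "F x 0 ** F 0 x = mat 1" by (rule flow_inv[OF cont fl z x])
    show "F 0 x ** F x 0 = mat 1" by (rule flow_inv[OF cont fl x z])
  qed
  have "continuous_on {0..1} (\<lambda>w. F 0 u ** F w 0)"
    by (rule bounded_bilinear.continuous_on[OF bb_mult continuous_on_const K])
  then show ?thesis
  proof (rule continuous_on_eq)
    fix w assume w: "w \<in> {0..1::real}"
    show "F 0 u ** F w 0 = F w u" by (rule cocycle[OF cont fl w z u, symmetric])
  qed
qed

lemma integrand_cont:
  fixes \<alpha> :: "real \<Rightarrow> real^'n^'n" and sG :: "real \<Rightarrow> real^'m^'n"
  assumes cont: "continuous_on {0..1} \<alpha>" and fl: "is_flow \<alpha> F" and u: "u \<in> {0..1}"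
    and cG: "continuous_on {0..1} sG"
  shows "continuous_on {0..1} (\<lambda>w. F w u ** Gam sG w ** transpose (F w u))"
proof -
  have c1: "continuous_on {0..1} (\<lambda>w. F w u)" by (rule flow_cont1[OF cont fl u])
  have cG': "continuous_on {0..1} (Gam sG)" unfolding Gam_def
    by (intro bounded_bilinear.continuous_on[OF bb_mult] cG bounded_linear.continuous_on[OF bl_transpose])
  show ?thesis
    by (intro bounded_bilinear.continuous_on[OF bb_mult] c1 cG' bounded_linear.continuous_on[OF bl_transpose])
qed

lemma hh_integrable:
  fixes \<alpha> :: "real \<Rightarrow> real^'n^'n" and sG :: "real \<Rightarrow> real^'m^'n"
  assumes cont: "continuous_on {0..1} \<alpha>" and fl: "is_flow \<alpha> F" and u: "u \<in> {0..1}"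
    and cG: "continuous_on {0..1} sG" and st: "0 \<le> s" "t \<le> 1"
  shows "(\<lambda>w. F w u ** Gam sG w ** transpose (F w u)) integrable_on {s..t}"
  by (rule integrable_continuous_interval, rule continuous_on_subset[OF integrand_cont[OF cont fl u cG]])
     (use st in auto)

lemma hh_conj:
  fixes \<alpha> :: "real \<Rightarrow> real^'n^'n" and sG :: "real \<Rightarrow> real^'m^'n"
  assumes cont: "continuous_on {0..1} \<alpha>" and fl: "is_flow \<alpha> F" and u: "u \<in> {0..1}" and v: "v \<in> {0..1}"
    and cG: "continuous_on {0..1} sG" and st: "0 \<le> s" "t \<le> 1"
  shows "hh F sG u s t = F v u ** hh F sG v s t ** transpose (F v u)"
proof -
  define P where "P = F v u"
  have bl: "bounded_linear (\<lambda>X. P ** X ** transpose P)"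
    by (intro bounded_linear_compose[OF bounded_bilinear.bounded_linear_left[OF bb_mult]]
          bounded_bilinear.bounded_linear_right[OF bb_mult])
  have "hh F sG u s t = integral {s..t} ((\<lambda>X. P ** X ** transpose P) \<circ> (\<lambda>w. F w v ** Gam sG w ** transpose (F w v)))"
    unfolding hh_def
  proof (rule integral_cong)
    fix w assume w: "w \<in> {s..t}"
    hence wI: "w \<in> {0..1}" using st by auto
    have e: "F w u = P ** F w v" using cocycle[OF cont fl wI v u] by (simp add: P_def)
    show "F w u ** Gam sG w ** transpose (F w u) = ((\<lambda>X. P ** X ** transpose P) \<circ> (\<lambda>w. F w v ** Gam sG w ** transpose (F w v))) w"
      unfolding e o_def matrix_transpose_mul by (simp only: matrix_mul_assoc)
  qed
  also have "\<dots> = P ** hh F sG v s t ** transpose P"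
    unfolding hh_def by (rule integral_linear[OF hh_integrable[OF cont fl v cG st] bl])
  finally show ?thesis by (simp add: P_def)
qed

lemma hh_add:
  fixes \<alpha> :: "real \<Rightarrow> real^'n^'n" and sG :: "real \<Rightarrow> real^'m^'n"
  assumes cont: "continuous_on {0..1} \<alpha>" and fl: "is_flow \<alpha> F" and u: "u \<in> {0..1}"
    and cG: "continuous_on {0..1} sG" and st: "0 \<le> a" "a \<le> c" "c \<le> b" "b \<le> 1"
  shows "hh F sG u a c + hh F sG u c b = hh F sG u a b"
  unfolding hh_def by (rule Henstock_Kurzweil_Integration.integral_combine[OF st(2,3) hh_integrable[OF cont fl u cG st(1) st(4)]])

lemma part_bounds:
  assumes P: "is_partition \<rho> l m r"
  shows "1 \<le> n \<Longrightarrow> k < 2^(n-1) \<Longrightarrow> 0 \<le> l n k \<and> r n k \<le> 1"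
proof (induction n arbitrary: k)
  case 0 then show ?case by simp
next
  case (Suc n)
  show ?case
  proof (cases "n = 0")
    case True
    then show ?thesis using Suc.prems P unfolding is_partition_def by simp
  next
    case False
    define k' where "k' = k div 2"
    have k'b: "k' < 2^(n-1)" using Suc.prems False unfolding k'_def
      by (metis Suc_diff_1 diff_Suc_1 less_mult_imp_div_less not_gr0 power_Suc2)
    have n1: "1 \<le> n" using False by simp
    have IH: "0 \<le> l n k' \<and> r n k' \<le> 1" by (rule Suc.IH[OF n1 k'b])
    have facts: "l n k' < m n k' \<and> m n k' < r n k' \<and>
        l (n+1) (2*k') = l n k' \<and> r (n+1) (2*k') = m n k' \<and> l (n+1) (2*k'+1) = m n k' \<and>
        r (n+1) (2*k'+1) = r n k'" using P n1 k'b unfolding is_partition_def by blast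
    have "k = 2*k' \<or> k = 2*k'+1" unfolding k'_def by presburger
    then show ?thesis using IH facts by auto
  qed
qed

theorem proposition3:
  fixes \<alpha> :: "real \<Rightarrow> ((real, 'd::{finite,linorder}) vec, 'd) vec"
    and sG :: "real \<Rightarrow> ((real, 'm::finite) vec, 'd) vec"
    and F :: "real \<Rightarrow> real \<Rightarrow> ((real, 'd) vec, 'd) vec"
    and \<rho> :: real and l m r :: "nat \<Rightarrow> nat \<Rightarrow> real"
    and \<sigma> :: "nat \<Rightarrow> nat \<Rightarrow> ((real, 'd) vec, 'd) vec"
  assumes "continuous_on {0..1} \<alpha>" and "continuous_on {0..1} sG"
    and "is_flow \<alpha> F"
    and "\<And>u v. 0 \<le> u \<Longrightarrow> u < v \<Longrightarrow> v \<le> 1 \<Longrightarrow>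
           pos_def_mat (F u v ** hh F sG u u v ** transpose (F u v))"
    and "is_partition \<rho> l m r"
    and "\<And>n k. 1 \<le> n \<Longrightarrow> k < 2^(n-1) \<Longrightarrow> is_cholesky (\<sigma> n k) (SigmaM F sG l m r n k)"
    and "1 \<le> n" and "k < 2^(n-1)"
  shows "MM F \<sigma> m n k = LM F sG \<sigma> l m n k + RM F sG \<sigma> m r n k
     \<and> matrix_inv (SigmaM F sG l m r n k) =
         matrix_inv (hh F sG (m n k) (l n k) (m n k)) + matrix_inv (hh F sG (m n k) (m n k) (r n k))"
proof -
  note cont = assms(1) and cG = assms(2) and fl = assms(3) and pd = assms(4)
  define l0 where "l0 = l n k"
  define m0 where "m0 = m n k"
  define r0 where "r0 = r n k"
  have ord: "0 \<le> l0" "l0 < m0" "m0 < r0" "r0 \<le> 1"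
    using part_bounds[OF assms(5) assms(7,8)] assms(5,7,8) unfolding is_partition_def l0_def m0_def r0_def
    by auto
  have lI: "l0 \<in> {0..1}" and mI: "m0 \<in> {0..1}" and rI: "r0 \<in> {0..1}" and zI: "(0::real) \<in> {0..1}"
    using ord by auto
  define A where "A = hh F sG m0 l0 m0"
  define B where "B = hh F sG m0 m0 r0"
  define H where "H = hh F sG m0 l0 r0"
  have HAB: "H = A + B" unfolding A_def B_def H_def
    using hh_add[OF cont fl mI cG, of l0 m0 r0] ord by simp
  have A_eq: "A = F l0 m0 ** hh F sG l0 l0 m0 ** transpose (F l0 m0)"
    unfolding A_def by (rule hh_conj[OF cont fl mI lI cG]) (use ord in auto)
  have invA: "invertible A" using posdef_invertible[OF pd[OF ord(1,2)]] ord A_eq by simp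
  have invB: "invertible B" unfolding B_def
    by (rule invertible_middle[OF posdef_invertible[OF pd]]) (use ord in auto)
  have invFlm: "invertible (F l0 m0)" unfolding invertible_def
    using flow_inv[OF cont fl lI mI] flow_inv[OF cont fl mI lI] by blast
  have invH0: "invertible (hh F sG l0 l0 r0)"
    by (rule invertible_middle[OF posdef_invertible[OF pd]]) (use ord in auto)
  have H_eq: "H = F l0 m0 ** hh F sG l0 l0 r0 ** transpose (F l0 m0)"
    unfolding H_def by (rule hh_conj[OF cont fl mI lI cG]) (use ord in auto)
  have invH: "invertible H" unfolding H_eq
    by (intro invertible_mult invFlm invH0 transpose_invertible)
  note iA = minv_props[OF invA] and iB = minv_props[OF invB] and iH = minv_props[OF invH]
  define iA where "iA = matrix_inv A"
  define iB where "iB = matrix_inv B"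
  define iH where "iH = matrix_inv H"
  have Sig: "SigmaM F sG l m r n k = A ** iH ** B"
    unfolding SigmaM_def A_def B_def iH_def H_def l0_def m0_def r0_def ..
  have invSig: "matrix_inv (SigmaM F sG l m r n k) = iA + iB"
  proof -
    have "A ** iH ** B ** (iB ** H ** iA) = A ** iH ** (B ** iB) ** H ** iA"
      by (simp only: matrix_mul_assoc)
    also have "\<dots> = A ** (iH ** H) ** iA" using iB by (simp add: iB_def matrix_mul_assoc)
    also have "\<dots> = mat 1" using iH iA by (simp add: iH_def iA_def)
    finally have "matrix_inv (A ** iH ** B) = iB ** H ** iA" by (rule minv_eq)
    also have "\<dots> = iB ** A ** iA + iB ** B ** iA"
      unfolding HAB by (simp add: matrix_add_ldistrib matrix_add_rdistrib')
    also have "\<dots> = iB + iA"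
    proof -
      have "iB ** A ** iA = iB" using iA by (simp add: iA_def flip: matrix_mul_assoc)
      moreover have "iB ** B ** iA = iA" using iB by (simp add: iB_def)
      ultimately show ?thesis by simp
    qed
    finally show ?thesis unfolding Sig by simp
  qed
  have part2: "matrix_inv (SigmaM F sG l m r n k) =
         matrix_inv (hh F sG (m n k) (l n k) (m n k)) + matrix_inv (hh F sG (m n k) (m n k) (r n k))"
    unfolding invSig iA_def iB_def A_def B_def l0_def m0_def r0_def ..
  define g where "g = F 0 m0"
  define gi where "gi = F m0 0"
  have ggi: "g ** gi = mat 1" unfolding g_def gi_def by (rule flow_inv[OF cont fl mI zI])
  have gig: "gi ** g = mat 1" unfolding g_def gi_def by (rule flow_inv[OF cont fl zI mI])
  have ig: "matrix_inv g = gi" by (rule minv_eq[OF ggi])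
  have conj0: "matrix_inv (hh F sG 0 a b) = transpose g ** matrix_inv (hh F sG m0 a b) ** g"
    if ab: "0 \<le> a" "b \<le> 1" "invertible (hh F sG m0 a b)" for a b
  proof -
    define X where "X = hh F sG m0 a b"
    have e: "hh F sG 0 a b = gi ** X ** transpose gi"
      unfolding X_def gi_def by (rule hh_conj[OF cont fl zI mI cG ab(1,2)])
    note iX = minv_props[OF ab(3)[folded X_def]]
    have t1: "transpose gi ** transpose g = mat 1"
      using ggi by (metis matrix_transpose_mul transpose_mat)
    have "gi ** X ** transpose gi ** (transpose g ** matrix_inv X ** g)
          = gi ** X ** (transpose gi ** transpose g) ** matrix_inv X ** g"
      by (simp only: matrix_mul_assoc)
    also have "\<dots> = gi ** (X ** matrix_inv X) ** g" using t1 by (simp add: matrix_mul_assoc)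
    also have "\<dots> = mat 1" using iX gig by simp
    finally show ?thesis unfolding e X_def by (rule minv_eq)
  qed
  have h0A: "matrix_inv (hh F sG 0 l0 m0) = transpose g ** iA ** g"
    using conj0[of l0 m0] ord invA by (simp add: iA_def A_def)
  have h0B: "matrix_inv (hh F sG 0 m0 r0) = transpose g ** iB ** g"
    using conj0[of m0 r0] ord invB by (simp add: iB_def B_def)
  define s where "s = \<sigma> n k"
  have chol: "s ** transpose s = A ** iH ** B"
    using assms(6)[OF assms(7,8)] unfolding is_cholesky_def s_def Sig by blast
  have invS: "invertible (A ** iH ** B)" using invSig
  proof -
    have "invertible (iH)" unfolding invertible_def iH_def using iH by blast
    then show ?thesis by (intro invertible_mult invA invB)
  qed
  have invs: "invertible s"
  proof -
    have "det (s ** transpose s) \<noteq> 0" using invS chol by (simp add: invertible_det_nz)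
    then show ?thesis by (simp add: invertible_det_nz det_mul)
  qed
  note is_ = minv_props[OF invs]
  have Sinv: "iA + iB = transpose (matrix_inv s) ** matrix_inv s"
  proof -
    have t1: "transpose s ** transpose (matrix_inv s) = mat 1"
      using is_(2) by (metis matrix_transpose_mul transpose_mat)
    have "s ** transpose s ** (transpose (matrix_inv s) ** matrix_inv s) = s ** (transpose s ** transpose (matrix_inv s)) ** matrix_inv s"
      by (simp only: matrix_mul_assoc)
    also have "\<dots> = mat 1" using t1 is_ by simp
    finally have "matrix_inv (s ** transpose s) = transpose (matrix_inv s) ** matrix_inv s" by (rule minv_eq)
    then show ?thesis using invSig chol Sig by simp
  qed
  have "LM F sG \<sigma> l m n k + RM F sG \<sigma> m r n k
      = (transpose g ** iA ** g) ** gi ** s + (transpose g ** iB ** g) ** gi ** s"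
    unfolding LM_def RM_def using h0A h0B ig by (simp add: g_def s_def l0_def m0_def r0_def)
  also have "\<dots> = transpose g ** (iA + iB) ** (g ** gi) ** s"
    by (simp add: matrix_add_ldistrib matrix_add_rdistrib' matrix_mul_assoc)
  also have "\<dots> = transpose g ** transpose (matrix_inv s) ** (matrix_inv s ** s)"
    using ggi Sinv by (simp add: matrix_mul_assoc)
  also have "\<dots> = MM F \<sigma> m n k" using is_ by (simp add: MM_def g_def s_def m0_def)
  finally show ?thesis using part2 by simp
qed

end
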